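(* Let $d\ge 1$ be an integer and for each subset $J\subseteq[d]$ let $Q_J\in\mathbb{R}^{d-1}$ be a point. Then there is an index $i\in[d]$ such that \[ \operatorname{conv}\{Q_J: J\subseteq[d],\ i\in J\}\cap\operatorname{conv}\{Q_J: J\subseteq[d],\ i\notin J\}\neq\emptyset. \]
   Context: $[d]=\{1,\dots,d\}$. *)

theory Defs
  imports "HOL-Analysis.Analysis"
begin

end

theory Submission
  imports Defs
begin

theorem lemma6:
  fixes d :: nat and Q :: "nat set \<Rightarrow> 'a::euclidean_space" and S :: "'a set"
  assumes "d \<ge> 1"
    and "subspace S" and "dim S = d - 1"
    and "\<forall>J. J \<subseteq> {1..d} \<longrightarrow> Q J \<in> S"
  shows "\<exists>i\<in>{1..d}.
           convex hull {Q J | J. J \<subseteq> {1..d} \<and> i \<in> J}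
           \<inter> convex hull {Q J | J. J \<subseteq> {1..d} \<and> i \<notin> J} \<noteq> {}"
proof (rule ccontr)
  let ?D = "{1..d::nat}"
  define IN where "IN i = convex hull {Q J | J. J \<subseteq> ?D \<and> i \<in> J}" for i
  define OUT where "OUT i = convex hull {Q J | J. J \<subseteq> ?D \<and> i \<notin> J}" for i
  assume "\<not> ?thesis"
  then have disj: "\<And>i. i \<in> ?D \<Longrightarrow> IN i \<inter> OUT i = {}"
    unfolding IN_def OUT_def by blast
  have fin: "finite {Q J | J. J \<subseteq> ?D \<and> P J}" for P
  proof -
    have "{Q J | J. J \<subseteq> ?D \<and> P J} \<subseteq> Q ` Pow ?D" by auto
    then show ?thesis by (rule finite_subset) simp
  qed
  have "\<forall>i\<in>?D. \<exists>a b. (\<forall>x\<in>IN i. inner a x < b) \<and> (\<forall>x\<in>OUT i. inner a x > b)"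
  proof
    fix i assume i: "i \<in> ?D"
    have ne: "OUT i \<noteq> {}"
    proof -
      have "Q {} \<in> {Q J | J. J \<subseteq> ?D \<and> i \<notin> J}" by auto
      then have "Q {} \<in> OUT i" unfolding OUT_def by (rule hull_inc)
      then show ?thesis by blast
    qed
    show "\<exists>a b. (\<forall>x\<in>IN i. inner a x < b) \<and> (\<forall>x\<in>OUT i. inner a x > b)"
    proof (rule separating_hyperplane_closed_compact)
      show "convex (IN i)" "convex (OUT i)" unfolding IN_def OUT_def by (rule convex_convex_hull)+
      show "compact (OUT i)" unfolding OUT_def by (rule finite_imp_compact_convex_hull[OF fin])
      show "closed (IN i)" unfolding IN_def by (rule compact_imp_closed[OF finite_imp_compact_convex_hull[OF fin]])
      show "OUT i \<noteq> {}" by (rule ne)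
      show "IN i \<inter> OUT i = {}" by (rule disj[OF i])
    qed
  qed
  then obtain a b where ab: "\<And>i. i \<in> ?D \<Longrightarrow> (\<forall>x\<in>IN i. inner (a i) x < b i) \<and> (\<forall>x\<in>OUT i. inner (a i) x > b i)"
    by metis
  have "\<forall>i. \<exists>y. y \<in> S \<and> (\<forall>x\<in>S. inner (a i) x = inner y x)"
  proof
    fix i
    obtain y z where y: "y \<in> span S" and z: "\<And>w. w \<in> span S \<Longrightarrow> orthogonal z w" and e: "a i = y + z"
      using orthogonal_subspace_decomp_exists[of S "a i"] by blast
    have "\<forall>x\<in>S. inner (a i) x = inner y x"
      using z e span_base by (auto simp: orthogonal_def inner_add_left)
    then show "\<exists>y. y \<in> S \<and> (\<forall>x\<in>S. inner (a i) x = inner y x)"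
      using y span_eq_iff assms(2) by metis
  qed
  then obtain p where p: "\<And>i. p i \<in> S" and pa: "\<And>i x. x \<in> S \<Longrightarrow> inner (a i) x = inner (p i) x"
    by metis
  have "\<exists>l. (\<exists>i\<in>?D. l i \<noteq> 0) \<and> (\<Sum>i\<in>?D. l i *\<^sub>R p i) = 0"
  proof (cases "inj_on p ?D")
    case False
    then obtain i j where ij: "i \<in> ?D" "j \<in> ?D" "i \<noteq> j" "p i = p j"
      unfolding inj_on_def by blast
    define l where "l k = (if k = i then 1 else if k = j then -1 else (0::real))" for k
    have "\<And>k. l k *\<^sub>R p k = (if k = i then p i else 0) + (if k = j then - p j else 0)"
      using ij by (auto simp: l_def)
    then have "(\<Sum>k\<in>?D. l k *\<^sub>R p k) = p i - p j"
      using ij by (simp add: sum.distrib)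
    then show ?thesis using ij by (intro exI[of _ l]) (auto simp: l_def)
  next
    case True
    have "dependent (p ` ?D)"
    proof (rule ccontr)
      assume "\<not> dependent (p ` ?D)"
      then have ind: "independent (p ` ?D)" by simp
      have "card (p ` ?D) \<le> dim S"
        by (rule independent_card_le_dim[OF _ ind]) (use p in auto)
      moreover have "card (p ` ?D) = d" using True card_image by fastforce
      ultimately show False using assms(1,3) by simp
    qed
    then obtain u where u: "\<exists>v\<in>p ` ?D. u v \<noteq> 0" "(\<Sum>v\<in>p ` ?D. u v *\<^sub>R v) = 0"
      using dependent_finite[of "p ` ?D"] by blast
    have "(\<Sum>i\<in>?D. u (p i) *\<^sub>R p i) = 0"
      using u(2) sum.reindex[OF True, of "\<lambda>v. u v *\<^sub>R v"] by simp
    then show ?thesis using u(1) by (intro exI[of _ "\<lambda>i. u (p i)"]) auto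
  qed
  then obtain l i0 where l0: "i0 \<in> ?D" "l i0 \<noteq> 0" and ls: "(\<Sum>i\<in>?D. l i *\<^sub>R p i) = 0"
    by blast
  define B where "B = (\<Sum>i\<in>?D. l i * b i)"
  have key: "(\<Sum>i\<in>?D. l i * (inner (a i) (Q J) - b i)) = - B" if J: "J \<subseteq> ?D" for J
  proof -
    have QS: "Q J \<in> S" using assms(4) J by blast
    have "(\<Sum>i\<in>?D. l i * inner (a i) (Q J)) = (\<Sum>i\<in>?D. l i * inner (p i) (Q J))"
      using pa[OF QS] by simp
    also have "\<dots> = inner (\<Sum>i\<in>?D. l i *\<^sub>R p i) (Q J)"
      by (simp add: inner_sum_left)
    also have "\<dots> = 0" using ls by simp
    finally have "(\<Sum>i\<in>?D. l i * inner (a i) (Q J)) = 0" .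
    then show ?thesis
      by (simp add: B_def right_diff_distrib sum_subtractf)
  qed
  have inI: "Q J \<in> IN i" if "J \<subseteq> ?D" "i \<in> J" for i J
    unfolding IN_def using that by (intro hull_inc) blast
  have outI: "Q J \<in> OUT i" if "J \<subseteq> ?D" "i \<notin> J" for i J
    unfolding OUT_def using that by (intro hull_inc) blast
  define J1 where "J1 = {i\<in>?D. l i > 0}"
  define J2 where "J2 = {i\<in>?D. l i < 0}"
  have J1sub: "J1 \<subseteq> ?D" and J2sub: "J2 \<subseteq> ?D" by (auto simp: J1_def J2_def)
  have g1: "l i * (inner (a i) (Q J1) - b i) \<le> 0 \<and> (l i \<noteq> 0 \<longrightarrow> l i * (inner (a i) (Q J1) - b i) < 0)"
    if i: "i \<in> ?D" for i
  proof (cases "l i > 0")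
    case True
    then have "i \<in> J1" using i by (simp add: J1_def)
    then have "inner (a i) (Q J1) < b i" using ab[OF i] inI[OF J1sub] by blast
    then show ?thesis using True mult_pos_neg[of "l i" "inner (a i) (Q J1) - b i"] mult_neg_neg[of "l i" "inner (a i) (Q J1) - b i"] by auto
  next
    case False
    then have "i \<notin> J1" using i by (simp add: J1_def)
    then have "inner (a i) (Q J1) > b i" using ab[OF i] outI[OF J1sub] by blast
    then show ?thesis using False mult_nonpos_nonneg[of "l i" "inner (a i) (Q J1) - b i"] mult_neg_pos[of "l i" "inner (a i) (Q J1) - b i"] mult_nonneg_nonneg[of "l i" "inner (a i) (Q J1) - b i"] mult_pos_pos[of "l i" "inner (a i) (Q J1) - b i"] by auto
  qed
  have g2: "l i * (inner (a i) (Q J2) - b i) \<ge> 0 \<and> (l i \<noteq> 0 \<longrightarrow> l i * (inner (a i) (Q J2) - b i) > 0)"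
    if i: "i \<in> ?D" for i
  proof (cases "l i < 0")
    case True
    then have "i \<in> J2" using i by (simp add: J2_def)
    then have "inner (a i) (Q J2) < b i" using ab[OF i] inI[OF J2sub] by blast
    then show ?thesis using True mult_pos_neg[of "l i" "inner (a i) (Q J2) - b i"] mult_neg_neg[of "l i" "inner (a i) (Q J2) - b i"] by auto
  next
    case False
    then have "i \<notin> J2" using i by (simp add: J2_def)
    then have "inner (a i) (Q J2) > b i" using ab[OF i] outI[OF J2sub] by blast
    then show ?thesis using False mult_nonpos_nonneg[of "l i" "inner (a i) (Q J2) - b i"] mult_neg_pos[of "l i" "inner (a i) (Q J2) - b i"] mult_nonneg_nonneg[of "l i" "inner (a i) (Q J2) - b i"] mult_pos_pos[of "l i" "inner (a i) (Q J2) - b i"] by auto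
  qed
  have "(\<Sum>i\<in>?D. l i * (inner (a i) (Q J1) - b i)) < (\<Sum>i\<in>?D. 0)"
    by (rule sum_strict_mono_ex1) (use g1 l0 in force)+
  then have "- B < 0" using key[OF J1sub] by simp
  moreover have "(\<Sum>i\<in>?D. 0) < (\<Sum>i\<in>?D. l i * (inner (a i) (Q J2) - b i))"
    by (rule sum_strict_mono_ex1) (use g2 l0 in force)+
  then have "- B > 0" using key[OF J2sub] by simp
  ultimately show False by simp
qed

end
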